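(* Let $q$ be a prime power, $h\geq 2$, let $f,g:\mathbb{F}_{q^h}\to\mathbb{F}_q$ be nonzero $\mathbb{F}_q$-linear functionals and $\alpha\in\mathbb{F}_{q^h}\setminus\mathbb{F}_q$. Define the point sets of $\mathrm{PG}(2,q^h)$ $\mathcal{L}=\{(x:f(x):y): x\in\mathbb{F}_{q^h},\ y\in\mathbb{F}_q,\ (x,y)\neq(0,0)\}$ and $\mathcal{L}'=\{(y':x':g(x')+y'\alpha): x'\in\mathbb{F}_{q^h},\ y'\in\mathbb{F}_q,\ (x',y')\neq(0,0)\}$. Suppose that (1) $g(1)=g(\alpha)=1$; (2) $f(1/\alpha)\neq 0$; (3) $f\left(\frac{k-1}{k(k-1)\alpha-k^2}\right)\neq 1$ for all $k\in\mathbb{F}_q\setminus\{0,1\}$. Then $\mathcal{L}$ and $\mathcal{L}'$ are disjoint.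
   Context: Points of $\mathrm{PG}(2,q^h)$ are written in homogeneous coordinates $(a:b:c)$. *)

theory Defs
  imports "HOL-Computational_Algebra.Primes"
begin

text \<open>The field F_{q^h} is modelled by a finite field type 'a with CARD('a) = q^h.
  Its subfield F_q is the set of roots of X^q - X.\<close>

definition subfield_Fq :: "nat \<Rightarrow> 'a::field set" where
  "subfield_Fq q = {x. x ^ q = x}"

definition prime_power :: "nat \<Rightarrow> bool" where
  "prime_power q \<longleftrightarrow> (\<exists>p k. prime p \<and> k > 0 \<and> q = p ^ k)"

definition Fq_linear_functional :: "nat \<Rightarrow> ('a::field \<Rightarrow> 'a) \<Rightarrow> bool" where
  "Fq_linear_functional q f \<longleftrightarrow>
     (\<forall>x. f x \<in> subfield_Fq q) \<and>
     (\<forall>x y. f (x + y) = f x + f y) \<and>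
     (\<forall>c \<in> subfield_Fq q. \<forall>x. f (c * x) = c * f x)"

definition proj_point :: "'a::field \<Rightarrow> 'a \<Rightarrow> 'a \<Rightarrow> ('a \<times> 'a \<times> 'a) set" where
  "proj_point a b c = {(l * a, l * b, l * c) | l. l \<noteq> 0}"

definition setL :: "nat \<Rightarrow> ('a::field \<Rightarrow> 'a) \<Rightarrow> ('a \<times> 'a \<times> 'a) set set" where
  "setL q f = {proj_point x (f x) y | x y. y \<in> subfield_Fq q \<and> (x, y) \<noteq> (0, 0)}"

definition setL' :: "nat \<Rightarrow> ('a::field \<Rightarrow> 'a) \<Rightarrow> 'a \<Rightarrow> ('a \<times> 'a \<times> 'a) set set" where
  "setL' q g \<alpha> = {proj_point y' x' (g x' + y' * \<alpha>) | x' y'.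
      y' \<in> subfield_Fq q \<and> (x', y') \<noteq> (0, 0)}"

end

theory Submission
  imports Defs
begin

theorem theorem3p4:
  fixes q h :: nat and f g :: "'a::{finite,field} \<Rightarrow> 'a" and \<alpha> :: 'a
  assumes "prime_power q" and "h \<ge> 2" and "card (UNIV :: 'a set) = q ^ h"
    and "Fq_linear_functional q f" and "\<exists>x. f x \<noteq> 0"
    and "Fq_linear_functional q g" and "\<exists>x. g x \<noteq> 0"
    and "\<alpha> \<notin> subfield_Fq q"
    and "g 1 = 1" and "g \<alpha> = 1"
    and "f (1 / \<alpha>) \<noteq> 0"
    and "\<forall>k \<in> subfield_Fq q - {0, 1}. f ((k - 1) / (k * (k - 1) * \<alpha> - k ^ 2)) \<noteq> 1"
  shows "setL q f \<inter> setL' q g \<alpha> = {}"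
proof (rule ccontr)
  define F where "F = (subfield_Fq q :: 'a set)"
  have memF: "\<And>a. a \<in> F \<longleftrightarrow> a ^ q = a" by (simp add: F_def subfield_Fq_def)
  have qpos: "q > 0" using assms(1) unfolding prime_power_def
    by (metis prime_gt_0_nat zero_less_power)
  have F0: "0 \<in> F" using qpos by (simp add: memF)
  have F1: "1 \<in> F" by (simp add: memF)
  have Fmul: "a * b \<in> F" if "a \<in> F" "b \<in> F" for a b
    using that by (simp add: memF power_mult_distrib)
  have Fdiv: "a / b \<in> F" if "a \<in> F" "b \<in> F" for a b
    using that by (simp add: memF power_divide)
  have fF: "\<And>x. f x \<in> F" and fadd: "\<And>x y. f (x + y) = f x + f y"
    and fsc: "\<And>c x. c \<in> F \<Longrightarrow> f (c * x) = c * f x"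
    using assms(4) by (auto simp: Fq_linear_functional_def F_def)
  have gF: "\<And>x. g x \<in> F" and gadd: "\<And>x y. g (x + y) = g x + g y"
    and gsc: "\<And>c x. c \<in> F \<Longrightarrow> g (c * x) = c * g x"
    using assms(6) by (auto simp: Fq_linear_functional_def F_def)
  have f0: "f 0 = 0" using fadd[of 0 0] by (metis add.right_neutral add_left_cancel)
  have g0: "g 0 = 0" using gadd[of 0 0] by (metis add.right_neutral add_left_cancel)
  have fneg: "f (- x) = - f x" for x using fadd[of x "-x"] f0 by (simp add: eq_neg_iff_add_eq_0 add.commute)
  obtain x0 where x0: "f x0 \<noteq> 0" using assms(5) by blast
  have surj: "a = f ((a / f x0) * x0)" if "a \<in> F" for a
    using fsc[OF Fdiv[OF that fF[of x0]]] x0 by simp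
  have Fadd: "a + b \<in> F" if "a \<in> F" "b \<in> F" for a b
    by (metis surj that fadd fF)
  have Fneg: "- a \<in> F" if "a \<in> F" for a
    by (metis surj that fneg fF)
  have anF: "\<alpha> \<notin> F" using assms(8) by (simp add: F_def)
  have a0: "\<alpha> \<noteq> 0" using anF F0 by auto
  assume "setL q f \<inter> setL' q g \<alpha> \<noteq> {}"
  then obtain P where "P \<in> setL q f" "P \<in> setL' q g \<alpha>" by blast
  then obtain x y x' y' where P1: "P = proj_point x (f x) y" and yF: "y \<in> F" and xy: "(x, y) \<noteq> (0, 0)"
    and P2: "P = proj_point y' x' (g x' + y' * \<alpha>)" and y'F: "y' \<in> F" and xy': "(x', y') \<noteq> (0, 0)"
    unfolding setL_def setL'_def F_def by blast
  have "(y', x', g x' + y' * \<alpha>) \<in> P" unfolding P2 proj_point_def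
    by (rule CollectI, rule exI[of _ 1]) simp
  then obtain \<mu> where mu: "\<mu> \<noteq> 0" and e1: "y' = \<mu> * x" and e2: "x' = \<mu> * f x"
    and e3: "g x' + y' * \<alpha> = \<mu> * y"
    unfolding P1 proj_point_def by blast
  show False
  proof (cases "x = 0")
    case True
    then show False using e1 e2 f0 xy' by simp
  next
    case xn: False
    have y'n: "y' \<noteq> 0" using e1 mu xn by simp
    have muv: "\<mu> = y' / x" using e1 xn by simp
    define c where "c = f x"
    have cF: "c \<in> F" using fF c_def by simp
    show False
    proof (cases "c = 0")
      case True
      then have "y' * \<alpha> = \<mu> * y" using e2 e3 g0 c_def by simp
      then have ay: "\<alpha> = y / x" using muv y'n xn by (simp add: field_simps)
      have yn: "y \<noteq> 0" using ay a0 by auto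
      have "x = y * (1 / \<alpha>)" using ay yn xn a0 by (simp add: field_simps)
      then have "f x = y * f (1 / \<alpha>)" using fsc[OF yF, of "1 / \<alpha>"] by (simp only:)
      then show False using True c_def yn assms(11) by simp
    next
      case cn: False
      define t where "t = 1 / x"
      define m where "m = g t"
      have mF: "m \<in> F" using gF m_def by simp
      have "x' = (y' * c) * t" using e2 muv c_def t_def by simp
      then have "g x' = y' * c * m" using gsc[OF Fmul[OF y'F cF]] m_def by simp
      then have "y' * c * m + y' * \<alpha> = y' / x * y" using e3 muv by simp
      then have eq: "c * m + \<alpha> = y * t" using y'n t_def
      proof -
        have "y' * (c * m + \<alpha>) = y' * (y * t)" using \<open>y' * c * m + y' * \<alpha> = y' / x * y\<close> t_def
          by (simp add: algebra_simps)
        then show ?thesis using y'n by simp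
      qed
      show False
      proof (cases "y = 0")
        case True
        then have "\<alpha> = - (c * m)" using eq by (simp add: eq_neg_iff_add_eq_0 add.commute)
        then show False using anF Fneg Fmul cF mF by metis
      next
        case yn: False
        have "t = (c * m + \<alpha>) / y" using eq yn by (simp add: eq_divide_eq mult.commute)
        then have tv: "t = (c * m / y) * 1 + (1 / y) * \<alpha>" by (simp add: add_divide_distrib)
        have "g t = (c * m / y) * g 1 + (1 / y) * g \<alpha>"
          by (subst tv, simp only: gadd gsc[OF Fdiv[OF Fmul[OF cF mF] yF]] gsc[OF Fdiv[OF F1 yF]])
        then have my: "m * y = c * m + 1" using yn m_def assms(9,10) by (simp add: field_simps)
        have ync: "y \<noteq> c" using my by auto
        define k where "k = c / y"
        have kF: "k \<in> F" using Fdiv cF yF k_def by simp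
        have k0: "k \<noteq> 0" using k_def cn yn by simp
        have k1: "k \<noteq> 1" using k_def ync yn by simp
        have cmn: "c * m + \<alpha> \<noteq> 0"
        proof
          assume "c * m + \<alpha> = 0"
          then have "\<alpha> = - (c * m)" by (simp add: eq_neg_iff_add_eq_0 add.commute)
          then show False using anF Fneg Fmul cF mF by metis
        qed
        have mv: "m = 1 / (y - c)" using my ync
          by (simp add: field_simps)
        have cv: "c = k * y" using k_def yn by simp
        have xv: "x = y / (c * m + \<alpha>)" using eq xn cmn yn t_def by (simp add: field_simps)
        have my2: "m * y * (1 - k) = 1" using my cv by (simp add: algebra_simps)
        have "(c * m + \<alpha>) * (1 - k) = k * (m * y * (1 - k)) + \<alpha> * (1 - k)" using cv
          by (simp add: algebra_simps)
        then have "(c * m + \<alpha>) * (1 - k) = k + \<alpha> * (1 - k)" using my2 by simp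
        then have d1: "k + \<alpha> * (1 - k) \<noteq> 0" using cmn k1 by auto
        define D where "D = k + \<alpha> * (1 - k)"
        have k1': "1 - k \<noteq> 0" using k1 by simp
        have Dv: "c * m + \<alpha> = D / (1 - k)" using \<open>(c * m + \<alpha>) * (1 - k) = k + \<alpha> * (1 - k)\<close> k1'
          unfolding D_def by (simp add: eq_divide_eq)
        have DN: "D \<noteq> 0" using d1 D_def by simp
        have "x = y * (1 - k) / D" using xv Dv k1' DN by simp
        then have "x / c = (1 - k) / (k * D)" using cv yn k0 DN by (simp add: field_simps)
        moreover have "k * (k - 1) * \<alpha> - k ^ 2 = - (k * D)" unfolding D_def
          by (simp add: algebra_simps power2_eq_square)
        ultimately have "x / c = (k - 1) / (k * (k - 1) * \<alpha> - k ^ 2)"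
          by (metis minus_diff_eq minus_divide_left divide_minus_right minus_minus)
        moreover have "f (x / c) = 1"
          using fsc[OF Fdiv[OF F1 cF], of x] cn c_def by simp
        ultimately show False using assms(12) kF k0 k1 F_def by auto
      qed
    qed
  qed
qed

end
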